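(* Let $p$ be a positive stochastic choice function on a finite set $X$ such that there exist $a,b,c\in X$ with $a\not\sim_p b$, $b\not\sim_p c$, $a\not\sim_p c$. Then $p$ satisfies ISA-1 and ISA-2 if and only if $p$ is a strict nondegenerate NSC.
   Context: $\mathscr{A}$ is the collection of nonempty subsets of $X$; $p(x,A)=0$ for $x\notin A$, $\sum_{a\in A}p(a,A)=1$, $p(a,A)>0$ for $a\in A$; $A\cup x=A\cup\{x\}$. $a\sim_p b$ means $\frac{p(a,A)}{p(b,A)}=\frac{p(a,\{a,b\})}{p(b,\{a,b\})}$ for all $A\ni a,b$. ISA-1: for any $A\in\mathscr{A}$, $a,b\in A$, $x\notin A$: if $\frac{p(a,\{a,x\})}{p(x,\{a,x\})}=\frac{p(a,\{a,b,x\})}{p(x,\{a,b,x\})}$ and $\frac{p(b,\{b,x\})}{p(x,\{b,x\})}=\frac{p(b,\{a,b,x\})}{p(x,\{a,b,x\})}$, then $\frac{p(a,A)}{p(b,A)}=\frac{p(a,A\cup x)}{p(b,A\cup x)}$. ISA-2: for any $A,B,C\in\mathscr{A}$, $a\in A\cap B$, $b\in A\cap C$, $x\in B\cap C$: if $\frac{p(a,\{a,x\})}{p(x,\{a,x\})}\ne\frac{p(a,B)}{p(x,B)}$ and $\frac{p(b,\{b,x\})}{p(x,\{b,x\})}\ne\frac{p(b,C)}{p(x,C)}$, then $\frac{p(a,A)}{p(b,A)}=\frac{p(a,A\cup x)}{p(b,A\cup x)}$. NSC: there exist a partition $X_1,\dots,X_K$ of $X$, $u:X\to\mathbb{R}_{++}$,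 $v:\bigcup_i2^{X_i}\to\mathbb{R}_+$, $v(\emptyset)=0$, with $p(a,A)=\frac{v(A\cap X_i)}{\sum_j v(A\cap X_j)}\frac{u(a)}{\sum_{b\in A\cap X_i}u(b)}$ for $a\in A\cap X_i$. Nondegenerate: at most one $i$ for which some $a\in X_i$ satisfies $\frac{\sum_{x\in A_i}u(x)}{v(A_i)}=\frac{u(a)}{v(\{a\})}$ for all $A_i\subseteq X_i$ containing $a$. Strict: for every $i$, every $A_i\subseteq X_i$, $a\in A_i$ and $x\in X_i\setminus A_i$, if $\frac{u(a)+u(x)}{u(x)}=\frac{v(\{a,x\})}{v(\{x\})}$ then $\frac{\sum_{a'\in A_i}u(a')+u(x)}{\sum_{a'\in A_i}u(a')}=\frac{v(A_i\cup x)}{v(A_i)}$. *)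

theory Defs
  imports Complex_Main "HOL-Library.Disjoint_Sets"
begin

definition menus :: "'a set \<Rightarrow> 'a set set" where
  "menus X = {A. A \<subseteq> X \<and> A \<noteq> {}}"

definition positive_scf :: "'a set \<Rightarrow> ('a \<Rightarrow> 'a set \<Rightarrow> real) \<Rightarrow> bool" where
  "positive_scf X p \<longleftrightarrow>
     (\<forall>A \<in> menus X.
        (\<forall>x. x \<notin> A \<longrightarrow> p x A = 0) \<and>
        (\<Sum>a\<in>A. p a A) = 1 \<and>
        (\<forall>a\<in>A. p a A > 0))"

definition equiv_p :: "'a set \<Rightarrow> ('a \<Rightarrow> 'a set \<Rightarrow> real) \<Rightarrow> 'a \<Rightarrow> 'a \<Rightarrow> bool" where
  "equiv_p X p a b \<longleftrightarrow>
     (\<forall>A \<in> menus X. a \<in> A \<longrightarrow> b \<in> A \<longrightarrow>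
        p a A / p b A = p a {a, b} / p b {a, b})"

definition ISA1 :: "'a set \<Rightarrow> ('a \<Rightarrow> 'a set \<Rightarrow> real) \<Rightarrow> bool" where
  "ISA1 X p \<longleftrightarrow>
     (\<forall>A \<in> menus X. \<forall>a\<in>A. \<forall>b\<in>A. \<forall>x\<in>X. x \<notin> A \<longrightarrow>
        p a {a, x} / p x {a, x} = p a {a, b, x} / p x {a, b, x} \<longrightarrow>
        p b {b, x} / p x {b, x} = p b {a, b, x} / p x {a, b, x} \<longrightarrow>
        p a A / p b A = p a (insert x A) / p b (insert x A))"

definition ISA2 :: "'a set \<Rightarrow> ('a \<Rightarrow> 'a set \<Rightarrow> real) \<Rightarrow> bool" where
  "ISA2 X p \<longleftrightarrow>
     (\<forall>A \<in> menus X. \<forall>B \<in> menus X. \<forall>C \<in> menus X.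
      \<forall>a \<in> A \<inter> B. \<forall>b \<in> A \<inter> C. \<forall>x \<in> B \<inter> C.
        p a {a, x} / p x {a, x} \<noteq> p a B / p x B \<longrightarrow>
        p b {b, x} / p x {b, x} \<noteq> p b C / p x C \<longrightarrow>
        p a A / p b A = p a (insert x A) / p b (insert x A))"

text \<open>NSC representation with partition P (the blocks X_1..X_K), u and v.
  v is only constrained on subsets of blocks (its domain in the paper).\<close>
definition NSC_rep :: "'a set \<Rightarrow> ('a \<Rightarrow> 'a set \<Rightarrow> real) \<Rightarrow> 'a set set
    \<Rightarrow> ('a \<Rightarrow> real) \<Rightarrow> ('a set \<Rightarrow> real) \<Rightarrow> bool" where
  "NSC_rep X p P u v \<longleftrightarrow>
     partition_on X P \<and>
     (\<forall>x\<in>X. u x > 0) \<and>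
     (\<forall>Y\<in>P. \<forall>S. S \<subseteq> Y \<longrightarrow> v S \<ge> 0) \<and>
     v {} = 0 \<and>
     (\<forall>A \<in> menus X. \<forall>Y \<in> P. \<forall>a \<in> A \<inter> Y.
        p a A = v (A \<inter> Y) / (\<Sum>Z\<in>P. v (A \<inter> Z)) * (u a / (\<Sum>b\<in>A \<inter> Y. u b)))"

definition NSC_degenerate_block :: "('a \<Rightarrow> real) \<Rightarrow> ('a set \<Rightarrow> real) \<Rightarrow> 'a set \<Rightarrow> bool" where
  "NSC_degenerate_block u v Y \<longleftrightarrow>
     (\<exists>a\<in>Y. \<forall>Ai. Ai \<subseteq> Y \<longrightarrow> a \<in> Ai \<longrightarrow>
        (\<Sum>x\<in>Ai. u x) / v Ai = u a / v {a})"

definition NSC_nondegenerate :: "'a set set \<Rightarrow> ('a \<Rightarrow> real) \<Rightarrow> ('a set \<Rightarrow> real) \<Rightarrow> bool" where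
  "NSC_nondegenerate P u v \<longleftrightarrow>
     (\<forall>Y\<in>P. \<forall>Z\<in>P. NSC_degenerate_block u v Y \<longrightarrow> NSC_degenerate_block u v Z \<longrightarrow> Y = Z)"

definition NSC_strict :: "'a set set \<Rightarrow> ('a \<Rightarrow> real) \<Rightarrow> ('a set \<Rightarrow> real) \<Rightarrow> bool" where
  "NSC_strict P u v \<longleftrightarrow>
     (\<forall>Y\<in>P. \<forall>Ai. Ai \<subseteq> Y \<longrightarrow> (\<forall>a\<in>Ai. \<forall>x\<in>Y - Ai.
        (u a + u x) / u x = v {a, x} / v {x} \<longrightarrow>
        ((\<Sum>a'\<in>Ai. u a') + u x) / (\<Sum>a'\<in>Ai. u a') = v (insert x Ai) / v Ai))"

definition strict_nondegenerate_NSC :: "'a set \<Rightarrow> ('a \<Rightarrow> 'a set \<Rightarrow> real) \<Rightarrow> bool" where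
  "strict_nondegenerate_NSC X p \<longleftrightarrow>
     (\<exists>P u v. NSC_rep X p P u v \<and> NSC_nondegenerate P u v \<and> NSC_strict P u v)"

end

theory Submission
  imports Defs
begin

definition rt :: "('a \<Rightarrow> 'a set \<Rightarrow> real) \<Rightarrow> 'a \<Rightarrow> 'a \<Rightarrow> 'a set \<Rightarrow> real" where
  "rt p a b M = p a M / p b M"

lemma scf_pos: "positive_scf X p \<Longrightarrow> M \<subseteq> X \<Longrightarrow> a \<in> M \<Longrightarrow> p a M > 0"
  unfolding positive_scf_def menus_def by blast

lemma scf_sum: "positive_scf X p \<Longrightarrow> M \<subseteq> X \<Longrightarrow> M \<noteq> {} \<Longrightarrow> (\<Sum>a\<in>M. p a M) = 1"
  unfolding positive_scf_def menus_def by blast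

lemma rt_pos: "positive_scf X p \<Longrightarrow> M \<subseteq> X \<Longrightarrow> a \<in> M \<Longrightarrow> b \<in> M \<Longrightarrow> rt p a b M > 0"
  unfolding rt_def using scf_pos by (metis divide_pos_pos)

lemma rt_mult: "positive_scf X p \<Longrightarrow> M \<subseteq> X \<Longrightarrow> b \<in> M \<Longrightarrow> rt p a b M * rt p b c M = rt p a c M"
  unfolding rt_def using scf_pos[of X p M b] by simp

lemma rt_swap: "rt p b a M = 1 / rt p a b M"
  unfolding rt_def by simp

lemma E_refl: "positive_scf X p \<Longrightarrow> equiv_p X p a a"
  unfolding equiv_p_def
proof (intro ballI impI)
  fix A assume "positive_scf X p" "A \<in> menus X" "a \<in> A"
  then have "p a A > 0" "p a {a} > 0" using scf_pos[of X p A a] scf_pos[of X p "{a}" a]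
    by (auto simp: menus_def)
  then show "p a A / p a A = p a {a, a} / p a {a, a}" by simp
qed

lemma E_sym: "equiv_p X p a b \<Longrightarrow> equiv_p X p b a"
  unfolding equiv_p_def
proof (intro ballI impI)
  fix A assume h: "\<forall>A\<in>menus X. a \<in> A \<longrightarrow> b \<in> A \<longrightarrow> p a A / p b A = p a {a, b} / p b {a, b}"
    and A: "A \<in> menus X" "b \<in> A" "a \<in> A"
  have "p a A / p b A = p a {a, b} / p b {a, b}" using h A by blast
  then have "inverse (p a A / p b A) = inverse (p a {a, b} / p b {a, b})" by simp
  then show "p b A / p a A = p b {b, a} / p a {b, a}" by (simp add: insert_commute)
qed

lemma E_rt: "equiv_p X p a b \<Longrightarrow> M \<subseteq> X \<Longrightarrow> a \<in> M \<Longrightarrow> b \<in> M \<Longrightarrow> rt p a b M = rt p a b {a, b}"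
  unfolding equiv_p_def rt_def menus_def by blast

lemma notE: "\<not> equiv_p X p a b \<Longrightarrow> \<exists>B. B \<subseteq> X \<and> a \<in> B \<and> b \<in> B \<and> p a {a, b} / p b {a, b} \<noteq> p a B / p b B"
proof -
  assume "\<not> equiv_p X p a b"
  then obtain A where A: "A \<in> menus X" "a \<in> A" "b \<in> A" "p a A / p b A \<noteq> p a {a, b} / p b {a, b}"
    unfolding equiv_p_def by blast
  show ?thesis by (rule exI[of _ A]) (use A in \<open>auto simp: menus_def\<close>)
qed

locale hard =
  fixes X :: "'a set" and p :: "'a \<Rightarrow> 'a set \<Rightarrow> real" and e1 e2 e3 :: 'a
  assumes fin: "finite X" and pscf: "positive_scf X p"
    and isa1: "ISA1 X p" and isa2: "ISA2 X p"
    and e1: "e1 \<in> X" and e2: "e2 \<in> X" and e3: "e3 \<in> X"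
    and n12: "\<not> equiv_p X p e1 e2" and n23: "\<not> equiv_p X p e2 e3" and n13: "\<not> equiv_p X p e1 e3"
begin

abbreviation E where "E a b \<equiv> equiv_p X p a b"

lemma E_trans:
  assumes ab: "E a b" and bc: "E b c" and bX: "b \<in> X"
  shows "E a c"
proof -
  have key: "rt p a c M = rt p a b {a, b} * rt p b c {b, c}"
    if M: "M \<subseteq> X" "a \<in> M" "c \<in> M" for M
  proof -
    have aX: "a \<in> X" and cX: "c \<in> X" using M by auto
    have "rt p a c M = rt p a c (insert b M)"
    proof (cases "b \<in> M")
      case True then show ?thesis by (simp add: insert_absorb)
    next
      case False
      have m: "M \<in> menus X" using M by (auto simp: menus_def)
      have h1: "p a {a, b} / p b {a, b} = p a {a, c, b} / p b {a, c, b}"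
        using E_rt[OF ab, of "{a,c,b}"] aX bX cX by (simp add: rt_def)
      have h2: "p c {c, b} / p b {c, b} = p c {a, c, b} / p b {a, c, b}"
        using E_rt[OF E_sym[OF bc], of "{a,c,b}"] aX bX cX by (simp add: rt_def)
      show ?thesis using isa1 m M False bX h1 h2 unfolding ISA1_def rt_def by blast
    qed
    also have "\<dots> = rt p a b (insert b M) * rt p b c (insert b M)"
      using rt_mult[OF pscf, of "insert b M" b a c] M bX by simp
    also have "\<dots> = rt p a b {a, b} * rt p b c {b, c}"
      using E_rt[OF ab, of "insert b M"] E_rt[OF bc, of "insert b M"] M bX by simp
    finally show ?thesis .
  qed
  show ?thesis unfolding equiv_p_def
  proof (intro ballI impI)
    fix A assume A: "A \<in> menus X" "a \<in> A" "c \<in> A"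
    then have "A \<subseteq> X" by (auto simp: menus_def)
    have "a \<in> X" "c \<in> X" using A \<open>A \<subseteq> X\<close> by auto
    then have "rt p a c A = rt p a c {a, c}" using key[of A] key[of "{a,c}"] A \<open>A \<subseteq> X\<close> by auto
    then show "p a A / p c A = p a {a, c} / p c {a, c}" by (simp add: rt_def)
  qed
qed

lemma notE_trans: "E a s \<Longrightarrow> \<not> E a t \<Longrightarrow> s \<in> X \<Longrightarrow> \<not> E s t"
proof
  assume "E a s" "\<not> E a t" "s \<in> X" "E s t"
  then have "E a t" using E_trans[of a s t] by simp
  then show False using \<open>\<not> E a t\<close> by simp
qed

lemma notE_X: "\<not> E a b \<Longrightarrow> a \<in> X \<and> b \<in> X"
  using notE[of X p a b] by auto

lemma step:
  assumes M: "M \<subseteq> X" "a \<in> M" "b \<in> M" and x: "x \<in> X" and ax: "\<not> E a x" and bx: "\<not> E b x"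
  shows "rt p a b (insert x M) = rt p a b M"
proof (cases "x \<in> M")
  case True then show ?thesis by (simp add: insert_absorb)
next
  case False
  obtain B where B: "B \<subseteq> X" "a \<in> B" "x \<in> B" "p a {a, x} / p x {a, x} \<noteq> p a B / p x B"
    using notE[OF ax] by blast
  obtain C where C: "C \<subseteq> X" "b \<in> C" "x \<in> C" "p b {b, x} / p x {b, x} \<noteq> p b C / p x C"
    using notE[OF bx] by blast
  have "M \<in> menus X" "B \<in> menus X" "C \<in> menus X" using M B C by (auto simp: menus_def)
  have I: "\<forall>A \<in> menus X. \<forall>B \<in> menus X. \<forall>C \<in> menus X.
      \<forall>a \<in> A \<inter> B. \<forall>b \<in> A \<inter> C. \<forall>x \<in> B \<inter> C.
        p a {a, x} / p x {a, x} \<noteq> p a B / p x B \<longrightarrow>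
        p b {b, x} / p x {b, x} \<noteq> p b C / p x C \<longrightarrow>
        p a A / p b A = p a (insert x A) / p b (insert x A)" using isa2 unfolding ISA2_def .
  have "p a M / p b M = p a (insert x M) / p b (insert x M)"
    using I[rule_format, of M B C a b x] \<open>M \<in> menus X\<close> \<open>B \<in> menus X\<close> \<open>C \<in> menus X\<close> M B C by simp
  then show ?thesis unfolding rt_def by simp
qed

lemma G_aux:
  assumes "finite D"
  shows "D \<subseteq> X \<Longrightarrow> (\<forall>x\<in>D. \<not> E a x \<and> \<not> E b x) \<Longrightarrow> M \<subseteq> X \<Longrightarrow> a \<in> M \<Longrightarrow> b \<in> M
    \<Longrightarrow> rt p a b (M \<union> D) = rt p a b M"
  using assms
proof (induction D rule: finite_induct)
  case empty then show ?case by simp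
next
  case (insert x D)
  have "rt p a b (M \<union> insert x D) = rt p a b (insert x (M \<union> D))" by simp
  also have "\<dots> = rt p a b (M \<union> D)"
    using step[of "M \<union> D" a b x] insert.prems by auto
  also have "\<dots> = rt p a b M" using insert by auto
  finally show ?case .
qed

lemma G:
  assumes "M \<subseteq> M'" "M' \<subseteq> X" "a \<in> M" "b \<in> M" "\<forall>x\<in>M' - M. \<not> E a x \<and> \<not> E b x"
  shows "rt p a b M' = rt p a b M"
proof -
  have "finite (M' - M)" using fin assms(2) finite_subset by blast
  then have "rt p a b (M \<union> (M' - M)) = rt p a b M"
    using G_aux[of "M' - M" a b M] assms by auto
  moreover have "M \<union> (M' - M) = M'" using assms(1) by auto
  ultimately show ?thesis by simp
qed


lemma two_bad: "x \<in> X \<Longrightarrow> E x y \<Longrightarrow> E x z \<Longrightarrow> E y z"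
  using E_trans[of y x z] E_sym[of X p x y] by blast

lemma third:
  assumes aX: "a \<in> X" and cX: "c \<in> X"
  shows "\<exists>t\<in>X. \<not> E a t \<and> \<not> E c t"
proof -
  have A: "\<not> E a e1 \<or> \<not> E a e2" "\<not> E a e1 \<or> \<not> E a e3" "\<not> E a e2 \<or> \<not> E a e3"
    using two_bad[OF aX, of e1 e2] two_bad[OF aX, of e1 e3] two_bad[OF aX, of e2 e3] n12 n13 n23 by blast+
  have C: "\<not> E c e1 \<or> \<not> E c e2" "\<not> E c e1 \<or> \<not> E c e3" "\<not> E c e2 \<or> \<not> E c e3"
    using two_bad[OF cX, of e1 e2] two_bad[OF cX, of e1 e3] two_bad[OF cX, of e2 e3] n12 n13 n23 by blast+
  have "(\<not> E a e1 \<and> \<not> E c e1) \<or> (\<not> E a e2 \<and> \<not> E c e2) \<or> (\<not> E a e3 \<and> \<not> E c e3)"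
    using A C by blast
  then show ?thesis using e1 e2 e3 by blast
qed

lemma rtX: "rt p a t (insert t S) > 0" if "a \<in> S" "S \<subseteq> X" "t \<in> X"
  using rt_pos[OF pscf, of "insert t S" a t] that by auto

definition psi :: "'a \<Rightarrow> 'a set \<Rightarrow> real" where
  "psi a S = (if \<not> E a e1 then rt p a e1 (insert e1 S)
     else rt p a e2 (insert e2 S) * rt p e2 e1 {e2, e1})"

lemma psi_pos: "a \<in> S \<Longrightarrow> S \<subseteq> X \<Longrightarrow> psi a S > 0"
  unfolding psi_def using rtX[of a S e1] rtX[of a S e2] rtX[of e2 "{e2}" e1] e1 e2
  by (simp add: insert_commute)

lemma C:
  assumes S: "a \<in> S" "S \<subseteq> X" "\<forall>s\<in>S. E a s" and t: "t \<in> X" "t' \<in> X"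
    and n: "\<not> E a t" "\<not> E a t'" "\<not> E t t'"
  shows "rt p a t (insert t S) * rt p t t' {t, t'} = rt p a t' (insert t' S)"
proof -
  define M where "M = insert t (insert t' S)"
  have MX: "M \<subseteq> X" using S t by (auto simp: M_def)
  have 1: "rt p a t M = rt p a t (insert t S)"
    by (rule G) (use S t n in \<open>auto simp: M_def\<close>)
  have 2: "rt p a t' M = rt p a t' (insert t' S)"
    by (rule G) (use S t n E_sym[of X p t' t] in \<open>auto simp: M_def\<close>)
  have ns: "\<not> E t s \<and> \<not> E t' s" if "s \<in> S" for s
  proof -
    have "E a s" "s \<in> X" using S that by auto
    then have "\<not> E s t" "\<not> E s t'" using notE_trans[OF \<open>E a s\<close> n(1)] notE_trans[OF \<open>E a s\<close> n(2)] by auto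
    then show ?thesis using E_sym[of X p t s] E_sym[of X p t' s] by blast
  qed
  have 3: "rt p t t' M = rt p t t' {t, t'}"
    by (rule G) (use S t ns in \<open>auto simp: M_def\<close>)
  have "rt p a t M * rt p t t' M = rt p a t' M"
    by (rule rt_mult[OF pscf MX]) (simp add: M_def)
  then show ?thesis using 1 2 3 by simp
qed

lemma T:
  assumes "x \<in> X" "y \<in> X" "z \<in> X" "\<not> E x y" "\<not> E y z" "\<not> E x z"
  shows "rt p x y {x, y} * rt p y z {y, z} = rt p x z {x, z}"
proof -
  have "rt p x y (insert y {x}) * rt p y z {y, z} = rt p x z (insert z {x})"
    by (rule C) (use assms E_refl[OF pscf, of x] in auto)
  then show ?thesis by (simp add: insert_commute)
qed


lemma Es: "E x y \<Longrightarrow> E y x" using E_sym[of X p x y] .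

lemma nE: "E x y \<Longrightarrow> \<not> E x z \<Longrightarrow> y \<in> X \<Longrightarrow> \<not> E y z" using notE_trans[of x y z] .

lemma K:
  assumes S: "a \<in> S" "S \<subseteq> X" "\<forall>s\<in>S. E a s" and tX: "t \<in> X" and at: "\<not> E a t"
  shows "psi a S = rt p a t (insert t S) * psi t {t}"
proof -
  have aX: "a \<in> X" using S by auto
  have n21: "\<not> E e2 e1" and n32: "\<not> E e3 e2" and n31: "\<not> E e3 e1"
    using n12 n23 n13 Es by blast+
  have pt: "psi t {t} = (if \<not> E t e1 then rt p t e1 {t, e1} else rt p t e2 {t, e2} * rt p e2 e1 {e2, e1})"
    by (simp add: psi_def insert_commute)
  show ?thesis
  proof (cases "E a e1")
    case False
    then have pa: "psi a S = rt p a e1 (insert e1 S)" by (simp add: psi_def)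
    show ?thesis
    proof (cases "E t e1")
      case False
      have h: "rt p a t (insert t S) * rt p t e1 {t, e1} = rt p a e1 (insert e1 S)"
        by (rule C) (use S tX e1 at \<open>\<not> E a e1\<close> False in auto)
      show ?thesis using h pa pt False by simp
    next
      case True
      have te2: "\<not> E t e2" using nE[OF Es[OF True] n12 tX] .
      show ?thesis
      proof (cases "E a e2")
        case False
        have h1: "rt p a t (insert t S) * rt p t e2 {t, e2} = rt p a e2 (insert e2 S)"
          by (rule C) (use S tX e2 at False te2 in auto)
        have h2: "rt p a e2 (insert e2 S) * rt p e2 e1 {e2, e1} = rt p a e1 (insert e1 S)"
          by (rule C) (use S e1 e2 False \<open>\<not> E a e1\<close> n21 in auto)
        have "rt p a t (insert t S) * psi t {t} = rt p a t (insert t S) * rt p t e2 {t, e2} * rt p e2 e1 {e2, e1}"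
          using pt True by simp
        also have "\<dots> = rt p a e1 (insert e1 S)" using h1 h2 by simp
        finally show ?thesis using pa by simp
      next
        case ae2: True
        have ae3: "\<not> E a e3" using nE[OF Es[OF ae2] n23 aX] .
        have e3t: "\<not> E e3 t" using nE[OF Es[OF True] n13 tX] Es by blast
        have h1: "rt p a e3 (insert e3 S) * rt p e3 t {e3, t} = rt p a t (insert t S)"
          by (rule C) (use S tX e3 at ae3 e3t in auto)
        have h2: "rt p a e3 (insert e3 S) * rt p e3 e1 {e3, e1} = rt p a e1 (insert e1 S)"
          by (rule C) (use S e1 e3 ae3 \<open>\<not> E a e1\<close> n31 in auto)
        have h3: "rt p e3 t {e3, t} * rt p t e2 {t, e2} = rt p e3 e2 {e3, e2}"
          by (rule T) (use e3 tX e2 e3t te2 n32 in auto)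
        have h4: "rt p e3 e2 {e3, e2} * rt p e2 e1 {e2, e1} = rt p e3 e1 {e3, e1}"
          by (rule T) (use e3 e1 e2 n32 n21 n31 in auto)
        have "rt p a t (insert t S) * psi t {t} = rt p a t (insert t S) * (rt p t e2 {t, e2} * rt p e2 e1 {e2, e1})"
          using pt True by simp
        also have "\<dots> = rt p a e3 (insert e3 S) * ((rt p e3 t {e3, t} * rt p t e2 {t, e2}) * rt p e2 e1 {e2, e1})"
          using h1[symmetric] by (simp add: mult.assoc)
        also have "\<dots> = rt p a e3 (insert e3 S) * rt p e3 e1 {e3, e1}" using h3 h4 by simp
        also have "\<dots> = rt p a e1 (insert e1 S)" using h2 .
        finally show ?thesis using pa by simp
      qed
    qed
  next
    case ae1: True
    then have pa: "psi a S = rt p a e2 (insert e2 S) * rt p e2 e1 {e2, e1}" by (simp add: psi_def)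
    have te1: "\<not> E t e1" using nE[OF ae1 at e1] Es by blast
    have ae2: "\<not> E a e2" using nE[OF Es[OF ae1] n12 aX] .
    have pt1: "psi t {t} = rt p t e1 {t, e1}" using pt te1 by simp
    show ?thesis
    proof (cases "E t e2")
      case False
      have h1: "rt p a t (insert t S) * rt p t e2 {t, e2} = rt p a e2 (insert e2 S)"
        by (rule C) (use S tX e2 at ae2 False in auto)
      have h2: "rt p t e2 {t, e2} * rt p e2 e1 {e2, e1} = rt p t e1 {t, e1}"
        by (rule T) (use tX e1 e2 False n21 te1 in auto)
      have "rt p a t (insert t S) * psi t {t} = rt p a t (insert t S) * (rt p t e2 {t, e2} * rt p e2 e1 {e2, e1})"
        using pt1 h2 by simp
      also have "\<dots> = rt p a e2 (insert e2 S) * rt p e2 e1 {e2, e1}"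
        using h1 by (simp add: mult.assoc[symmetric])
      finally show ?thesis using pa by simp
    next
      case te2: True
      have ae3: "\<not> E a e3" using nE[OF Es[OF ae1] n13 aX] .
      have e3t: "\<not> E e3 t" using nE[OF Es[OF te2] n23 tX] Es by blast
      have h1: "rt p a e3 (insert e3 S) * rt p e3 t {e3, t} = rt p a t (insert t S)"
        by (rule C) (use S tX e3 at ae3 e3t in auto)
      have h2: "rt p a e3 (insert e3 S) * rt p e3 e2 {e3, e2} = rt p a e2 (insert e2 S)"
        by (rule C) (use S e2 e3 ae3 ae2 n32 in auto)
      have h3: "rt p e3 t {e3, t} * rt p t e1 {t, e1} = rt p e3 e1 {e3, e1}"
        by (rule T) (use e3 tX e1 e3t te1 n31 in auto)
      have h4: "rt p e3 e2 {e3, e2} * rt p e2 e1 {e2, e1} = rt p e3 e1 {e3, e1}"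
        by (rule T) (use e3 e1 e2 n32 n21 n31 in auto)
      have "rt p a t (insert t S) * psi t {t} = rt p a e3 (insert e3 S) * (rt p e3 t {e3, t} * rt p t e1 {t, e1})"
        using pt1 h1[symmetric] by (simp add: mult.assoc)
      also have "\<dots> = rt p a e3 (insert e3 S) * (rt p e3 e2 {e3, e2} * rt p e2 e1 {e2, e1})"
        using h3 h4 by simp
      also have "\<dots> = rt p a e2 (insert e2 S) * rt p e2 e1 {e2, e1}"
        using h2 by (simp add: mult.assoc[symmetric])
      finally show ?thesis using pa by simp
    qed
  qed
qed


definition blkA :: "'a set \<Rightarrow> 'a \<Rightarrow> 'a set" where
  "blkA A a = {y \<in> A. E a y}"

lemma blkA_props:
  assumes "A \<subseteq> X" "a \<in> A"
  shows "a \<in> blkA A a" "blkA A a \<subseteq> X" "\<forall>s\<in>blkA A a. E a s" "blkA A a \<subseteq> A"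
  using assms E_refl[OF pscf, of a] by (auto simp: blkA_def)

lemma rt_div: "M \<subseteq> X \<Longrightarrow> t \<in> M \<Longrightarrow> rt p a c M = rt p a t M / rt p c t M"
  unfolding rt_def using scf_pos[OF pscf, of M t] by (simp add: field_simps)

lemma Star:
  assumes A: "A \<subseteq> X" "a \<in> A" "c \<in> A" and ac: "\<not> E a c"
  shows "rt p a c A = psi a (blkA A a) / psi c (blkA A c)"
proof -
  have aX: "a \<in> X" and cX: "c \<in> X" using A by auto
  obtain t where tX: "t \<in> X" and at: "\<not> E a t" and ct: "\<not> E c t" using third[OF aX cX] by blast
  define S where "S = blkA A a"
  define T where "T = blkA A c"
  have SP: "a \<in> S" "S \<subseteq> X" "\<forall>s\<in>S. E a s" "S \<subseteq> A" using blkA_props[OF A(1,2)] by (auto simp: S_def)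
  have TP: "c \<in> T" "T \<subseteq> X" "\<forall>s\<in>T. E c s" "T \<subseteq> A" using blkA_props[OF A(1,3)] by (auto simp: T_def)
  define M where "M = insert t (S \<union> T)"
  have MX: "M \<subseteq> X" using SP TP tX by (auto simp: M_def)
  have s1: "rt p a c A = rt p a c (S \<union> T)"
  proof (rule G)
    show "S \<union> T \<subseteq> A" using SP TP by blast
    show "A \<subseteq> X" using A by blast
    show "a \<in> S \<union> T" "c \<in> S \<union> T" using SP TP by blast+
    show "\<forall>x\<in>A - (S \<union> T). \<not> E a x \<and> \<not> E c x" by (simp add: S_def T_def blkA_def)
  qed
  have s2: "rt p a c M = rt p a c (S \<union> T)"
  proof (rule G)
    show "S \<union> T \<subseteq> M" "M \<subseteq> X" using MX by (auto simp: M_def)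
    show "a \<in> S \<union> T" "c \<in> S \<union> T" using SP TP by blast+
    show "\<forall>x\<in>M - (S \<union> T). \<not> E a x \<and> \<not> E c x" using at ct by (auto simp: M_def)
  qed
  have s3: "rt p a c M = rt p a t M / rt p c t M" by (rule rt_div[OF MX]) (simp add: M_def)
  have nT: "\<not> E a y \<and> \<not> E t y" if "y \<in> T" for y
  proof -
    have cy: "E c y" and yX: "y \<in> X" using TP that by auto
    have ca: "\<not> E c a" using ac Es[of c a] by blast
    have "\<not> E y a" "\<not> E y t" using nE[OF cy ca yX] nE[OF cy ct yX] by auto
    then show ?thesis using Es[of a y] Es[of t y] by blast
  qed
  have nS: "\<not> E c y \<and> \<not> E t y" if "y \<in> S" for y
  proof -
    have ay: "E a y" and yX: "y \<in> X" using SP that by auto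
    have "\<not> E y c" "\<not> E y t" using nE[OF ay ac yX] nE[OF ay at yX] by auto
    then show ?thesis using Es[of c y] Es[of t y] by blast
  qed
  have s4: "rt p a t M = rt p a t (insert t S)"
  proof (rule G)
    show "insert t S \<subseteq> M" "M \<subseteq> X" using MX by (auto simp: M_def)
    show "a \<in> insert t S" "t \<in> insert t S" using SP by blast+
    show "\<forall>x\<in>M - insert t S. \<not> E a x \<and> \<not> E t x" using nT by (auto simp: M_def)
  qed
  have s5: "rt p c t M = rt p c t (insert t T)"
  proof (rule G)
    show "insert t T \<subseteq> M" "M \<subseteq> X" using MX by (auto simp: M_def)
    show "c \<in> insert t T" "t \<in> insert t T" using TP by blast+
    show "\<forall>x\<in>M - insert t T. \<not> E c x \<and> \<not> E t x" using nS by (auto simp: M_def)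
  qed
  have k1: "psi a S = rt p a t (insert t S) * psi t {t}" by (rule K) (use SP tX at in auto)
  have k2: "psi c T = rt p c t (insert t T) * psi t {t}" by (rule K) (use TP tX ct in auto)
  have pt: "psi t {t} > 0" using psi_pos[of t "{t}"] tX by simp
  have "rt p a c A = rt p a t (insert t S) / rt p c t (insert t T)" using s1 s2 s3 s4 s5 by simp
  also have "\<dots> = psi a S / psi c T" using k1 k2 pt by simp
  finally show ?thesis by (simp add: S_def T_def)
qed

lemma EqR:
  assumes S: "a \<in> S" "c \<in> S" "S \<subseteq> X" "\<forall>s\<in>S. E a s"
  shows "psi a S / psi c S = rt p a c {a, c}"
proof -
  have aX: "a \<in> X" and cX: "c \<in> X" using S by auto
  obtain t where tX: "t \<in> X" and at: "\<not> E a t" using third[OF aX aX] by blast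
  have ac: "E a c" using S by auto
  have cs: "\<forall>s\<in>S. E c s"
  proof
    fix s assume "s \<in> S"
    then have "E a s" using S by auto
    then show "E c s" using E_trans[OF Es[OF ac] _ aX, of s] by simp
  qed
  have ct: "\<not> E c t" using nE[OF ac at cX] .
  have k1: "psi a S = rt p a t (insert t S) * psi t {t}" by (rule K) (use S tX at in auto)
  have k2: "psi c S = rt p c t (insert t S) * psi t {t}" by (rule K) (use S cs tX ct in auto)
  have pt: "psi t {t} > 0" using psi_pos[of t "{t}"] tX by simp
  have MX: "insert t S \<subseteq> X" using S tX by auto
  have "psi a S / psi c S = rt p a t (insert t S) / rt p c t (insert t S)" using k1 k2 pt by simp
  also have "\<dots> = rt p a c (insert t S)" using rt_div[OF MX, of t a c] by simp
  also have "\<dots> = rt p a c {a, c}" by (rule E_rt[OF ac MX]) (use S in auto)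
  finally show ?thesis .
qed

lemma blkA_eq:
  assumes "A \<subseteq> X" "c \<in> A" "a \<in> A" "E a c"
  shows "blkA A c = blkA A a"
proof -
  have aX: "a \<in> X" and cX: "c \<in> X" using assms by auto
  have "E c y \<longleftrightarrow> E a y" for y
    using E_trans[OF assms(4) _ cX, of y] E_trans[OF Es[OF assms(4)] _ aX, of y] by blast
  then show ?thesis unfolding blkA_def by simp
qed

lemma pform:
  assumes A: "A \<subseteq> X" "a \<in> A"
  shows "p a A = psi a (blkA A a) / (\<Sum>c\<in>A. psi c (blkA A c))"
proof -
  have key: "p a A * psi c (blkA A c) = p c A * psi a (blkA A a)" if c: "c \<in> A" for c
  proof (cases "E a c")
    case True
    have b: "blkA A c = blkA A a" using blkA_eq[OF A(1) c A(2) True] .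
    have cb: "c \<in> blkA A a" using c True by (simp add: blkA_def)
    note bp = blkA_props[OF A]
    have "psi a (blkA A a) / psi c (blkA A a) = rt p a c {a, c}"
      using EqR[OF bp(1) cb bp(2) bp(3)] .
    also have "\<dots> = rt p a c A" using E_rt[OF True A(1) A(2) c] by simp
    finally have "psi a (blkA A a) / psi c (blkA A a) = p a A / p c A" by (simp add: rt_def)
    moreover have "psi c (blkA A a) > 0" "p c A > 0"
      using psi_pos[OF cb bp(2)] scf_pos[OF pscf A(1) c] by auto
    ultimately show ?thesis using b by (simp add: field_simps)
  next
    case False
    have "p a A / p c A = psi a (blkA A a) / psi c (blkA A c)"
      using Star[OF A c False] by (simp add: rt_def)
    moreover have "psi c (blkA A c) > 0" "p c A > 0"
      using psi_pos[of c "blkA A c"] blkA_props[OF A(1) c] scf_pos[OF pscf A(1) c] by auto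
    ultimately show ?thesis by (simp add: field_simps)
  qed
  have "p a A * (\<Sum>c\<in>A. psi c (blkA A c)) = (\<Sum>c\<in>A. p a A * psi c (blkA A c))"
    by (simp add: sum_distrib_left)
  also have "\<dots> = (\<Sum>c\<in>A. p c A * psi a (blkA A a))" using key by (rule sum.cong[OF refl])
  also have "\<dots> = (\<Sum>c\<in>A. p c A) * psi a (blkA A a)" by (simp add: sum_distrib_right)
  also have "\<dots> = psi a (blkA A a)" using scf_sum[OF pscf A(1)] A by auto
  finally have eq: "p a A * (\<Sum>c\<in>A. psi c (blkA A c)) = psi a (blkA A a)" .
  have "(\<Sum>c\<in>A. psi c (blkA A c)) > 0"
  proof (rule sum_pos)
    show "finite A" using fin A(1) finite_subset by blast
    show "A \<noteq> {}" using A by auto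
    show "\<And>c. c \<in> A \<Longrightarrow> 0 < psi c (blkA A c)"
    proof -
      fix c assume "c \<in> A"
      then show "0 < psi c (blkA A c)" using psi_pos[of c "blkA A c"] blkA_props[OF A(1), of c] by simp
    qed
  qed
  then show ?thesis using eq by (simp add: field_simps)
qed


definition PP :: "'a set set" where "PP = (blkA X) ` X"
definition uu :: "'a \<Rightarrow> real" where "uu a = psi a (blkA X a)"
definition vv :: "'a set \<Rightarrow> real" where "vv S = (\<Sum>c\<in>S. psi c S)"

lemma blk_of:
  assumes "Y \<in> PP" "a \<in> Y"
  shows "Y = blkA X a"
proof -
  obtain x where x: "x \<in> X" "Y = blkA X x" using assms(1) by (auto simp: PP_def)
  have "a \<in> X" "E x a" using assms(2) x by (auto simp: blkA_def)
  then show ?thesis using blkA_eq[of X a x] x by auto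
qed

lemma partPP: "partition_on X PP"
proof (rule partition_onI)
  have ab: "a \<in> blkA X a" if "a \<in> X" for a using E_refl[OF pscf, of a] that by (simp add: blkA_def)
  show "\<Union>PP = X"
  proof
    show "\<Union>PP \<subseteq> X" by (auto simp: PP_def blkA_def)
    show "X \<subseteq> \<Union>PP" using ab by (auto simp: PP_def)
  qed
  show "{} \<notin> PP" using ab by (auto simp: PP_def)
  fix Y Z assume Y: "Y \<in> PP" and Z: "Z \<in> PP" and YZ: "Y \<noteq> Z"
  show "disjnt Y Z"
  proof (rule ccontr)
    assume "\<not> disjnt Y Z"
    then obtain y where "y \<in> Y" "y \<in> Z" by (auto simp: disjnt_def)
    then have "Y = blkA X y" "Z = blkA X y" using blk_of Y Z by auto
    then show False using YZ by simp
  qed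
qed

lemma inter_blk: "A \<subseteq> X \<Longrightarrow> a \<in> A \<Longrightarrow> A \<inter> blkA X a = blkA A a"
  by (auto simp: blkA_def)

lemma uu_pos: "a \<in> X \<Longrightarrow> uu a > 0"
  unfolding uu_def using psi_pos[of a "blkA X a"] blkA_props[of X a] by simp

lemma psi_ratio:
  assumes S: "a \<in> S" "c \<in> S" "S \<subseteq> X" "\<forall>s\<in>S. E a s"
  shows "psi c S = psi a S * uu c / uu a"
proof -
  have aX: "a \<in> X" and cX: "c \<in> X" using S by auto
  have ac: "E a c" using S by auto
  note bp = blkA_props[of X a, OF _ aX]
  have cb: "c \<in> blkA X a" using cX ac by (simp add: blkA_def)
  have bc: "blkA X c = blkA X a" using blkA_eq[of X c a] aX cX ac by simp
  have r1: "psi a S / psi c S = rt p a c {a, c}" using EqR[OF S] .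
  have r2: "psi a (blkA X a) / psi c (blkA X a) = rt p a c {a, c}" using EqR[OF bp(1) cb bp(2) bp(3)] by simp
  have "psi a S / psi c S = uu a / uu c" using r1 r2 bc by (simp add: uu_def)
  moreover have "psi c S > 0" "psi a S > 0" "uu a > 0" "uu c > 0"
    using psi_pos[of c S] psi_pos[of a S] uu_pos[OF aX] uu_pos[OF cX] S by auto
  ultimately show ?thesis by (simp add: field_simps)
qed

lemma Vform:
  assumes S: "a \<in> S" "S \<subseteq> X" "\<forall>s\<in>S. E a s"
  shows "vv S = psi a S * (\<Sum>c\<in>S. uu c) / uu a"
proof -
  have "vv S = (\<Sum>c\<in>S. psi a S / uu a * uu c)"
    unfolding vv_def
  proof (rule sum.cong[OF refl])
    fix c assume "c \<in> S"
    then show "psi c S = psi a S / uu a * uu c" using psi_ratio[of a S c] S by simp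
  qed
  also have "\<dots> = psi a S / uu a * (\<Sum>c\<in>S. uu c)" by (simp add: sum_distrib_left)
  finally show ?thesis by simp
qed

lemma sumU_pos: "S \<subseteq> X \<Longrightarrow> S \<noteq> {} \<Longrightarrow> (\<Sum>c\<in>S. uu c) > 0"
proof -
  assume "S \<subseteq> X" "S \<noteq> {}"
  moreover have "finite S" using fin \<open>S \<subseteq> X\<close> finite_subset by blast
  ultimately show ?thesis using sum_pos[of S uu] uu_pos by blast
qed

lemma sumP:
  assumes A: "A \<subseteq> X"
  shows "(\<Sum>Z\<in>PP. vv (A \<inter> Z)) = (\<Sum>c\<in>A. psi c (blkA A c))"
proof -
  have fP: "finite PP" using fin by (simp add: PP_def)
  have "(\<Sum>Z\<in>PP. vv (A \<inter> Z)) = (\<Sum>Z\<in>PP. (\<Sum>c\<in>A \<inter> Z. psi c (blkA A c)))"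
  proof (rule sum.cong[OF refl])
    fix Z assume Z: "Z \<in> PP"
    show "vv (A \<inter> Z) = (\<Sum>c\<in>A \<inter> Z. psi c (blkA A c))"
      unfolding vv_def
    proof (rule sum.cong[OF refl])
      fix c assume "c \<in> A \<inter> Z"
      then have "Z = blkA X c" "c \<in> A" using blk_of Z by auto
      then show "psi c (A \<inter> Z) = psi c (blkA A c)" using inter_blk[OF A] by simp
    qed
  qed
  also have "\<dots> = (\<Sum>c\<in>(\<Union>Z\<in>PP. A \<inter> Z). psi c (blkA A c))"
  proof (rule sum.UNION_disjoint[symmetric])
    show "finite PP" by (rule fP)
    show "\<forall>Z\<in>PP. finite (A \<inter> Z)" using fin A finite_subset by blast
    show "\<forall>Y\<in>PP. \<forall>Z\<in>PP. Y \<noteq> Z \<longrightarrow> (A \<inter> Y) \<inter> (A \<inter> Z) = {}"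
      using partition_onD2[OF partPP] by (auto dest: disjointD)
  qed
  also have "(\<Union>Z\<in>PP. A \<inter> Z) = A" using partition_onD1[OF partPP] A by auto
  finally show ?thesis .
qed

lemma NSC: "NSC_rep X p PP uu vv"
  unfolding NSC_rep_def
proof (intro conjI ballI allI impI)
  show "partition_on X PP" by (rule partPP)
  show "\<And>x. x \<in> X \<Longrightarrow> 0 < uu x" by (rule uu_pos)
  show "vv {} = 0" by (simp add: vv_def)
  fix Y S assume Y: "Y \<in> PP" and S: "S \<subseteq> Y"
  have "Y \<subseteq> X" using partition_onD1[OF partPP] Y by auto
  then have "\<And>c. c \<in> S \<Longrightarrow> psi c S \<ge> 0" using psi_pos[of _ S] S by force
  then show "0 \<le> vv S" unfolding vv_def by (rule sum_nonneg)
next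
  fix A Y a assume A: "A \<in> menus X" and Y: "Y \<in> PP" and a: "a \<in> A \<inter> Y"
  have AX: "A \<subseteq> X" and aA: "a \<in> A" using A a by (auto simp: menus_def)
  have Yb: "Y = blkA X a" using blk_of Y a by auto
  define S where "S = blkA A a"
  have AY: "A \<inter> Y = S" using inter_blk[OF AX aA] Yb by (simp add: S_def)
  note bp = blkA_props[OF AX aA]
  have V: "vv S = psi a S * (\<Sum>c\<in>S. uu c) / uu a" using Vform[of a S] bp by (simp add: S_def)
  have U: "(\<Sum>c\<in>S. uu c) > 0" using sumU_pos[of S] bp by (auto simp: S_def)
  have ua: "uu a > 0" using uu_pos AX aA by auto
  have "vv S * (uu a / (\<Sum>c\<in>S. uu c)) = psi a S" using V U ua by (simp add: field_simps)
  then have "vv (A \<inter> Y) / (\<Sum>Z\<in>PP. vv (A \<inter> Z)) * (uu a / (\<Sum>b\<in>A \<inter> Y. uu b))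
      = psi a S / (\<Sum>c\<in>A. psi c (blkA A c))"
    using sumP[OF AX] AY by (simp add: divide_simps)
  then show "p a A = vv (A \<inter> Y) / (\<Sum>Z\<in>PP. vv (A \<inter> Z)) * (uu a / (\<Sum>b\<in>A \<inter> Y. uu b))"
    using pform[OF AX aA] by (simp add: S_def)
qed


lemma sub_blk: "Y \<in> PP \<Longrightarrow> a \<in> Ai \<Longrightarrow> Ai \<subseteq> Y \<Longrightarrow> Ai \<subseteq> X \<and> (\<forall>s\<in>Ai. E a s)"
  using blk_of[of Y a] by (auto simp: blkA_def)

lemma vv_single: "vv {x} = psi x {x}" by (simp add: vv_def)

lemma Strict: "NSC_strict PP uu vv"
  unfolding NSC_strict_def
proof (intro ballI allI impI)
  fix Y Ai a x
  assume Y: "Y \<in> PP" and Ai: "Ai \<subseteq> Y" and a: "a \<in> Ai" and x: "x \<in> Y - Ai"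
    and prem: "(uu a + uu x) / uu x = vv {a, x} / vv {x}"
  have AiX: "Ai \<subseteq> X" and Ea: "\<forall>s\<in>Ai. E a s" using sub_blk[OF Y a Ai] by auto
  have xa: "x \<noteq> a" using x a by auto
  have Yb: "Y = blkA X a" using blk_of Y a Ai by auto
  have aX: "a \<in> X" and xX: "x \<in> X" and ax: "E a x" using x Yb a AiX by (auto simp: blkA_def)
  have xa': "E x a" using Es[OF ax] .
  have ua: "uu a > 0" and ux: "uu x > 0" using uu_pos aX xX by auto
  have "vv {a, x} = psi x {a, x} * (\<Sum>c\<in>{a, x}. uu c) / uu x"
    by (rule Vform) (use aX xX xa' E_refl[OF pscf, of x] in auto)
  also have "(\<Sum>c\<in>{a, x}. uu c) = uu a + uu x" using xa by simp
  finally have vax: "vv {a, x} = psi x {a, x} * (uu a + uu x) / uu x" .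
  have p1: "psi x {a, x} > 0" "psi x {x} > 0" using psi_pos[of x "{a,x}"] psi_pos[of x "{x}"] aX xX by auto
  have pe: "psi x {a, x} = psi x {x}"
  proof -
    have "(uu a + uu x) / uu x = psi x {a, x} * (uu a + uu x) / uu x / psi x {x}"
      using prem vax vv_single by simp
    then have "((uu a + uu x) * uu x) * psi x {x} = ((uu a + uu x) * uu x) * psi x {a, x}"
      using p1 ua ux by (simp add: field_simps)
    then show ?thesis using ua ux by auto
  qed
  obtain t where tX: "t \<in> X" and xt: "\<not> E x t" using third[OF xX xX] by blast
  have at: "\<not> E a t" using nE[OF xa' xt aX] .
  have ptt: "psi t {t} > 0" using psi_pos[of t "{t}"] tX by simp
  have k1: "psi x {a, x} = rt p x t (insert t {a, x}) * psi t {t}"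
    by (rule K) (use aX xX tX xt xa' E_refl[OF pscf, of x] in auto)
  have k2: "psi x {x} = rt p x t (insert t {x}) * psi t {t}"
    by (rule K) (use xX tX xt E_refl[OF pscf, of x] in auto)
  have rr: "rt p x t {a, t, x} = rt p x t {t, x}"
    using pe k1 k2 ptt by (simp add: insert_commute)
  have tx: "t \<noteq> x" using xt E_refl[OF pscf, of x] by auto
  have m: "insert t Ai \<in> menus X" using AiX tX by (auto simp: menus_def)
  have h1: "p a {a, x} / p x {a, x} = p a {a, t, x} / p x {a, t, x}"
    using E_rt[OF ax, of "{a, t, x}"] aX tX xX by (simp add: rt_def)
  have h2: "p t {t, x} / p x {t, x} = p t {a, t, x} / p x {a, t, x}"
    using rr rt_swap[of p t x "{a,t,x}"] rt_swap[of p t x "{t,x}"] by (simp add: rt_def)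
  have I1: "\<forall>A \<in> menus X. \<forall>a\<in>A. \<forall>b\<in>A. \<forall>x\<in>X. x \<notin> A \<longrightarrow>
        p a {a, x} / p x {a, x} = p a {a, b, x} / p x {a, b, x} \<longrightarrow>
        p b {b, x} / p x {b, x} = p b {a, b, x} / p x {a, b, x} \<longrightarrow>
        p a A / p b A = p a (insert x A) / p b (insert x A)" using isa1 unfolding ISA1_def .
  have "p a (insert t Ai) / p t (insert t Ai) = p a (insert x (insert t Ai)) / p t (insert x (insert t Ai))"
    using I1[rule_format, OF m, of a t x] a xX x tx h1 h2 by auto
  then have ri: "rt p a t (insert t (insert x Ai)) = rt p a t (insert t Ai)"
    by (simp add: rt_def insert_commute)
  have Ea2: "\<forall>s\<in>insert x Ai. E a s" using Ea ax by auto
  have ka: "psi a (insert x Ai) = rt p a t (insert t (insert x Ai)) * psi t {t}"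
    by (rule K) (use a AiX xX Ea2 tX at in auto)
  have kb: "psi a Ai = rt p a t (insert t Ai) * psi t {t}"
    by (rule K) (use a AiX Ea tX at in auto)
  have pp: "psi a (insert x Ai) = psi a Ai" using ka kb ri by simp
  have fAi: "finite Ai" using fin AiX finite_subset by blast
  have xn: "x \<notin> Ai" using x by auto
  have v1: "vv (insert x Ai) = psi a (insert x Ai) * (\<Sum>c\<in>insert x Ai. uu c) / uu a"
    by (rule Vform) (use a AiX xX Ea2 in auto)
  have U1: "(\<Sum>c\<in>insert x Ai. uu c) = uu x + (\<Sum>c\<in>Ai. uu c)" using fAi xn by simp
  have v2: "vv Ai = psi a Ai * (\<Sum>c\<in>Ai. uu c) / uu a" by (rule Vform) (use a AiX Ea in auto)
  have Upos: "(\<Sum>c\<in>Ai. uu c) > 0" using sumU_pos[of Ai] AiX a by auto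
  have pa: "psi a Ai > 0" using psi_pos[of a Ai] a AiX by simp
  show "((\<Sum>a'\<in>Ai. uu a') + uu x) / (\<Sum>a'\<in>Ai. uu a') = vv (insert x Ai) / vv Ai"
  proof -
    have w1: "vv (insert x Ai) = psi a Ai * ((\<Sum>c\<in>Ai. uu c) + uu x) / uu a" using v1 U1 pp by simp
    show ?thesis unfolding w1 v2 using Upos pa ua by (simp add: field_simps)
  qed
qed

lemma degpt:
  assumes Y: "Y \<in> PP" and a: "a \<in> Y"
    and d: "\<forall>Ai. Ai \<subseteq> Y \<longrightarrow> a \<in> Ai \<longrightarrow> (\<Sum>x\<in>Ai. uu x) / vv Ai = uu a / vv {a}"
    and Ai: "Ai \<subseteq> Y" "a \<in> Ai"
  shows "psi a Ai = psi a {a}"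
proof -
  have AiX: "Ai \<subseteq> X" and Ea: "\<forall>s\<in>Ai. E a s" using sub_blk[OF Y Ai(2) Ai(1)] by auto
  have aX: "a \<in> X" using AiX Ai by auto
  have v: "vv Ai = psi a Ai * (\<Sum>c\<in>Ai. uu c) / uu a" by (rule Vform) (use Ai AiX Ea in auto)
  have Upos: "(\<Sum>c\<in>Ai. uu c) > 0" using sumU_pos[of Ai] AiX Ai by auto
  have pa: "psi a Ai > 0" "psi a {a} > 0" using psi_pos[of a Ai] psi_pos[of a "{a}"] Ai AiX aX by auto
  have ua: "uu a > 0" using uu_pos aX by auto
  have "(\<Sum>x\<in>Ai. uu x) / vv Ai = uu a / vv {a}" using d Ai by blast
  then have "uu a / psi a Ai = uu a / psi a {a}" using v vv_single Upos pa ua by (simp add: field_simps)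
  then show ?thesis using ua pa by (simp add: field_simps)
qed

lemma Nondeg: "NSC_nondegenerate PP uu vv"
  unfolding NSC_nondegenerate_def
proof (intro ballI impI)
  fix Y Z assume Y: "Y \<in> PP" and Z: "Z \<in> PP"
    and dY: "NSC_degenerate_block uu vv Y" and dZ: "NSC_degenerate_block uu vv Z"
  obtain a where a: "a \<in> Y" and da: "\<forall>Ai. Ai \<subseteq> Y \<longrightarrow> a \<in> Ai \<longrightarrow> (\<Sum>x\<in>Ai. uu x) / vv Ai = uu a / vv {a}"
    using dY unfolding NSC_degenerate_block_def by blast
  obtain b where b: "b \<in> Z" and db: "\<forall>Ai. Ai \<subseteq> Z \<longrightarrow> b \<in> Ai \<longrightarrow> (\<Sum>x\<in>Ai. uu x) / vv Ai = uu b / vv {b}"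
    using dZ unfolding NSC_degenerate_block_def by blast
  have Yb: "Y = blkA X a" using blk_of[OF Y a] .
  have Zb: "Z = blkA X b" using blk_of[OF Z b] .
  have aX: "a \<in> X" and bX: "b \<in> X" using a b Yb Zb by (auto simp: blkA_def)
  have key: "rt p a b M = psi a {a} / psi b {b}" if M: "M \<subseteq> X" "a \<in> M" "b \<in> M" and nab: "\<not> E a b" for M
  proof -
    have "rt p a b M = psi a (blkA M a) / psi b (blkA M b)" using Star[OF M nab] .
    moreover have "psi a (blkA M a) = psi a {a}"
    proof (rule degpt[OF Y a da])
      show "blkA M a \<subseteq> Y" unfolding Yb blkA_def using M(1) by blast
      show "a \<in> blkA M a" using blkA_props(1)[OF M(1,2)] .
    qed
    moreover have "psi b (blkA M b) = psi b {b}"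
    proof (rule degpt[OF Z b db])
      show "blkA M b \<subseteq> Z" unfolding Zb blkA_def using M(1) by blast
      show "b \<in> blkA M b" using blkA_props(1)[OF M(1,3)] .
    qed
    ultimately show ?thesis by simp
  qed
  have ab: "E a b"
  proof (rule ccontr)
    assume nab: "\<not> E a b"
    have "E a b" unfolding equiv_p_def
    proof (intro ballI impI)
      fix M assume "M \<in> menus X" "a \<in> M" "b \<in> M"
      then have MX: "M \<subseteq> X" by (simp add: menus_def)
      have "rt p a b M = psi a {a} / psi b {b}" using key[OF MX \<open>a \<in> M\<close> \<open>b \<in> M\<close> nab] .
      moreover have "rt p a b {a, b} = psi a {a} / psi b {b}" using key[of "{a,b}"] nab aX bX by simp
      ultimately have "rt p a b M = rt p a b {a, b}" by simp
      then show "p a M / p b M = p a {a, b} / p b {a, b}" by (simp add: rt_def)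
    qed
    then show False using nab by simp
  qed
  have "blkA X b = blkA X a" using blkA_eq[of X b a] aX bX ab by simp
  then show "Y = Z" using Yb Zb by simp
qed


lemma hard_dir: "strict_nondegenerate_NSC X p"
  unfolding strict_nondegenerate_NSC_def
  by (rule exI[of _ PP], rule exI[of _ uu], rule exI[of _ vv]) (simp add: NSC Strict Nondeg)

end


locale easy =
  fixes X :: "'a set" and p :: "'a \<Rightarrow> 'a set \<Rightarrow> real"
    and P :: "'a set set" and u :: "'a \<Rightarrow> real" and v :: "'a set \<Rightarrow> real"
  assumes fin: "finite X" and pscf: "positive_scf X p"
    and rep: "NSC_rep X p P u v" and strict: "NSC_strict P u v"
begin

lemma part: "partition_on X P" using rep[unfolded NSC_rep_def] by (rule conjunct1)
lemma upos: "x \<in> X \<Longrightarrow> u x > 0"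
  using rep[unfolded NSC_rep_def, THEN conjunct2, THEN conjunct1] by simp
lemma vnn: "Y \<in> P \<Longrightarrow> S \<subseteq> Y \<Longrightarrow> v S \<ge> 0"
  using rep[unfolded NSC_rep_def, THEN conjunct2, THEN conjunct2, THEN conjunct1] by simp
lemma formula: "A \<in> menus X \<Longrightarrow> Y \<in> P \<Longrightarrow> a \<in> A \<inter> Y \<Longrightarrow>
   p a A = v (A \<inter> Y) / (\<Sum>Z\<in>P. v (A \<inter> Z)) * (u a / (\<Sum>b\<in>A \<inter> Y. u b))"
  using rep[unfolded NSC_rep_def, THEN conjunct2, THEN conjunct2, THEN conjunct2, THEN conjunct2]
  by simp

definition blk :: "'a \<Rightarrow> 'a set" where "blk a = (THE Y. Y \<in> P \<and> a \<in> Y)"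

lemma blk_unique: "Y \<in> P \<Longrightarrow> a \<in> Y \<Longrightarrow> blk a = Y"
proof -
  assume Y: "Y \<in> P" "a \<in> Y"
  have u: "Z = Y" if Z: "Z \<in> P \<and> a \<in> Z" for Z
  proof (rule ccontr)
    assume "Z \<noteq> Y"
    then have "Z \<inter> Y = {}" using disjointD[OF partition_onD2[OF part]] Z Y by blast
    then show False using Z Y by blast
  qed
  show ?thesis unfolding blk_def
  proof (rule the_equality)
    show "Y \<in> P \<and> a \<in> Y" using Y by simp
    show "\<And>Z. Z \<in> P \<and> a \<in> Z \<Longrightarrow> Z = Y" by (rule u)
  qed
qed

lemma blk_in: "a \<in> X \<Longrightarrow> blk a \<in> P \<and> a \<in> blk a"
proof -
  assume "a \<in> X"
  then obtain Y where "Y \<in> P" "a \<in> Y" using partition_onD1[OF part] by blast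
  then show ?thesis using blk_unique by simp
qed

lemma blk_sub: "a \<in> X \<Longrightarrow> blk a \<subseteq> X"
proof -
  assume "a \<in> X"
  then have "blk a \<in> P" using blk_in by blast
  then show ?thesis using partition_onD1[OF part] by blast
qed

definition D :: "'a set \<Rightarrow> real" where "D A = (\<Sum>Z\<in>P. v (A \<inter> Z))"
definition w :: "'a \<Rightarrow> 'a set \<Rightarrow> real" where
  "w a A = v (A \<inter> blk a) * u a / (\<Sum>b\<in>A \<inter> blk a. u b)"

lemma pw: "A \<subseteq> X \<Longrightarrow> a \<in> A \<Longrightarrow> p a A = w a A / D A"
proof -
  assume A: "A \<subseteq> X" "a \<in> A"
  then have "A \<in> menus X" by (auto simp: menus_def)
  moreover have "blk a \<in> P" "a \<in> A \<inter> blk a" using blk_in A by auto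
  ultimately show ?thesis using formula[of A "blk a" a] by (simp add: w_def D_def)
qed

lemma D_pos: "A \<subseteq> X \<Longrightarrow> a \<in> A \<Longrightarrow> D A > 0"
proof -
  assume A: "A \<subseteq> X" "a \<in> A"
  have "D A \<ge> 0" unfolding D_def
  proof (rule sum_nonneg)
    fix Z assume "Z \<in> P"
    then show "v (A \<inter> Z) \<ge> 0" using vnn[of Z "A \<inter> Z"] by simp
  qed
  moreover have "D A \<noteq> 0" using pw[OF A] scf_pos[OF pscf A] by auto
  ultimately show ?thesis by simp
qed

lemma w_pos: "A \<subseteq> X \<Longrightarrow> a \<in> A \<Longrightarrow> w a A > 0"
proof -
  assume A: "A \<subseteq> X" "a \<in> A"
  have "w a A = p a A * D A" using pw[OF A] D_pos[OF A] by simp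
  then show ?thesis using scf_pos[OF pscf A] D_pos[OF A] by simp
qed

lemma rt_w: "A \<subseteq> X \<Longrightarrow> a \<in> A \<Longrightarrow> b \<in> A \<Longrightarrow> p a A / p b A = w a A / w b A"
  using pw[of A a] pw[of A b] D_pos[of A a] by simp

lemma same_blk: "A \<subseteq> X \<Longrightarrow> a \<in> A \<Longrightarrow> b \<in> A \<Longrightarrow> blk a = blk b \<Longrightarrow> p a A / p b A = u a / u b"
proof -
  assume A: "A \<subseteq> X" "a \<in> A" "b \<in> A" and ab: "blk a = blk b"
  have "w a A > 0" using w_pos A by auto
  then have "v (A \<inter> blk a) \<noteq> 0" "(\<Sum>c\<in>A \<inter> blk a. u c) \<noteq> 0" by (auto simp: w_def)
  moreover have "u b > 0" using upos A by auto
  ultimately show ?thesis using rt_w[OF A] ab by (simp add: w_def)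
qed

lemma notin_blk: "a \<in> X \<Longrightarrow> blk x \<noteq> blk a \<Longrightarrow> x \<notin> blk a"
  using blk_unique[of "blk a" x] blk_in[of a] by auto

lemma w_ins: "x \<notin> blk a \<Longrightarrow> w a (insert x A) = w a A"
  unfolding w_def by (simp add: Int_insert_left)

lemma isa2: "ISA2 X p"
  unfolding ISA2_def
proof (intro ballI impI)
  fix A B C a b x
  assume A: "A \<in> menus X" and B: "B \<in> menus X" and C: "C \<in> menus X"
    and a: "a \<in> A \<inter> B" and b: "b \<in> A \<inter> C" and x: "x \<in> B \<inter> C"
    and h1: "p a {a, x} / p x {a, x} \<noteq> p a B / p x B"
    and h2: "p b {b, x} / p x {b, x} \<noteq> p b C / p x C"
  have AX: "A \<subseteq> X" "B \<subseteq> X" "C \<subseteq> X" using A B C by (auto simp: menus_def)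
  have aX: "a \<in> X" and bX: "b \<in> X" and xX: "x \<in> X" using a b x AX by auto
  show "p a A / p b A = p a (insert x A) / p b (insert x A)"
  proof (cases "x \<in> A")
    case True then show ?thesis by (simp add: insert_absorb)
  next
    case False
    have xa: "blk x \<noteq> blk a"
    proof
      assume e: "blk x = blk a"
      have "p a {a, x} / p x {a, x} = u a / u x" using same_blk[of "{a,x}" a x] aX xX e by simp
      moreover have "p a B / p x B = u a / u x" using same_blk[of B a x] AX a x e by simp
      ultimately show False using h1 by simp
    qed
    have xb: "blk x \<noteq> blk b"
    proof
      assume e: "blk x = blk b"
      have "p b {b, x} / p x {b, x} = u b / u x" using same_blk[of "{b,x}" b x] bX xX e by simp
      moreover have "p b C / p x C = u b / u x" using same_blk[of C b x] AX b x e by simp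
      ultimately show False using h2 by simp
    qed
    have AxX: "insert x A \<subseteq> X" using AX xX by auto
    show ?thesis
    proof (cases "blk a = blk b")
      case True
      then show ?thesis using same_blk[OF AX(1)] same_blk[OF AxX] a b by simp
    next
      case False
      have "x \<notin> blk a" "x \<notin> blk b" using notin_blk[OF aX xa] notin_blk[OF bX xb] by auto
      then show ?thesis using rt_w[OF AX(1)] rt_w[OF AxX] a b w_ins by simp
    qed
  qed
qed

lemma affect:
  assumes A: "A \<subseteq> X" "c \<in> A" "d \<in> A" and cd: "blk c \<noteq> blk d" and x: "x \<in> X" "x \<notin> A"
    and xc: "blk x = blk c"
    and h: "p d {d, x} / p x {d, x} = p d {c, d, x} / p x {c, d, x}"
  shows "w c (insert x A) = w c A"
proof -
  have cX: "c \<in> X" and dX: "d \<in> X" using A by auto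
  define Y where "Y = blk c"
  have YP: "Y \<in> P" and cY: "c \<in> Y" using blk_in[OF cX] by (auto simp: Y_def)
  have xY: "x \<in> Y" using blk_in[OF x(1)] xc by (simp add: Y_def)
  have dZ: "d \<in> blk d" using blk_in[OF dX] by simp
  have xd: "x \<notin> blk d" using notin_blk[OF dX, of x] xc cd by simp
  have cd': "c \<notin> blk d" using notin_blk[OF dX cd] .
  have dY: "d \<notin> Y" using notin_blk[OF cX, of d] cd by (simp add: Y_def)
  have xc': "x \<noteq> c" using x A by auto
  have bx: "blk x = Y" by (simp add: xc Y_def)
  have s1: "{d, x} \<inter> blk d = {d}" "{c, d, x} \<inter> blk d = {d}" using dZ xd cd' by auto
  have s2: "{d, x} \<inter> Y = {x}" "{c, d, x} \<inter> Y = {c, x}" using xY cY dY by auto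
  have vd: "v {d} > 0"
  proof -
    have "w d {d, x} > 0" using w_pos[of "{d,x}" d] dX x by simp
    moreover have "v {d} \<ge> 0" using vnn[of "blk d" "{d}"] blk_in[OF dX] by auto
    ultimately show ?thesis using s1 by (auto simp: w_def split: if_splits)
  qed
  have ux: "u x > 0" and uc: "u c > 0" using upos x cX by auto
  have wdx: "w d {d, x} = v {d}" "w d {c, d, x} = v {d}" using s1 upos[OF dX] by (auto simp: w_def)
  have wxx: "w x {d, x} = v {x}" "w x {c, d, x} = v {c, x} * u x / (u c + u x)"
    using s2 bx ux xc' by (auto simp: w_def)
  have "w d {d, x} / w x {d, x} = w d {c, d, x} / w x {c, d, x}"
    using h rt_w[of "{d,x}" d x] rt_w[of "{c,d,x}" d x] cX dX x by simp
  then have e1: "v {d} / v {x} = v {d} / (v {c, x} * u x / (u c + u x))" using wdx wxx by simp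
  have wp1: "w x {d, x} > 0" "w x {c, d, x} > 0" using w_pos[of "{d,x}" x] w_pos[of "{c,d,x}" x] cX dX x by auto
  have vx: "v {x} = v {c, x} * u x / (u c + u x)"
  proof -
    have iff: "(v {d} / v {x} = v {d} / (v {c, x} * u x / (u c + u x))) = (v {d} = 0 \<or> v {x} = v {c, x} * u x / (u c + u x))"
      by (rule divide_cancel_left)
    show ?thesis using iff e1 vd by simp
  qed
  have prem: "(u c + u x) / u x = v {c, x} / v {x}"
    using vx ux uc wp1 wxx by (simp add: field_simps)
  define Ai where "Ai = A \<inter> Y"
  have Ai: "Ai \<subseteq> Y" "c \<in> Ai" "x \<in> Y - Ai" using cY A xY x by (auto simp: Ai_def)
  have sc: "((\<Sum>a'\<in>Ai. u a') + u x) / (\<Sum>a'\<in>Ai. u a') = v (insert x Ai) / v Ai"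
    using strict YP Ai prem unfolding NSC_strict_def by blast
  have fAi: "finite Ai" using fin A finite_subset by (auto simp: Ai_def)
  have Upos: "(\<Sum>a'\<in>Ai. u a') > 0" using sum_pos[OF fAi, of u] Ai upos A by (auto simp: Ai_def)
  have wA: "w c A = v Ai * u c / (\<Sum>a'\<in>Ai. u a')" by (simp add: w_def Ai_def Y_def)
  have wAx: "w c (insert x A) = v (insert x Ai) * u c / ((\<Sum>a'\<in>Ai. u a') + u x)"
  proof -
    have "insert x A \<inter> blk c = insert x Ai" using xY by (auto simp: Ai_def Y_def)
    moreover have "(\<Sum>a'\<in>insert x Ai. u a') = u x + (\<Sum>a'\<in>Ai. u a')" using fAi Ai by simp
    ultimately show ?thesis by (simp add: w_def add.commute)
  qed
  have "v Ai > 0" using w_pos[of A c] A wA Upos uc by (auto simp: zero_less_mult_iff zero_less_divide_iff)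
  then have vi: "v (insert x Ai) = v Ai * ((\<Sum>a'\<in>Ai. u a') + u x) / (\<Sum>a'\<in>Ai. u a')"
    using sc Upos by (simp add: field_simps)
  have W: "(\<Sum>a'\<in>Ai. u a') + u x > 0" using Upos ux by simp
  have aux: "\<And>U W V c. U > 0 \<Longrightarrow> W > 0 \<Longrightarrow> (V * W / U) * c / W = V * c / (U::real)"
    by (simp add: field_simps)
  show ?thesis unfolding wA wAx vi using aux[OF Upos W] by simp
qed

lemma isa1: "ISA1 X p"
  unfolding ISA1_def
proof (intro ballI impI)
  fix A a b x
  assume A: "A \<in> menus X" and a: "a \<in> A" and b: "b \<in> A" and x: "x \<in> X" "x \<notin> A"
    and h1: "p a {a, x} / p x {a, x} = p a {a, b, x} / p x {a, b, x}"
    and h2: "p b {b, x} / p x {b, x} = p b {a, b, x} / p x {a, b, x}"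
  have AX: "A \<subseteq> X" using A by (auto simp: menus_def)
  have AxX: "insert x A \<subseteq> X" using AX x by auto
  have aX: "a \<in> X" and bX: "b \<in> X" using a b AX by auto
  show "p a A / p b A = p a (insert x A) / p b (insert x A)"
  proof (cases "blk a = blk b")
    case True
    then show ?thesis using same_blk[OF AX] same_blk[OF AxX] a b by simp
  next
    case False
    have wa: "w a (insert x A) = w a A"
    proof (cases "blk x = blk a")
      case True
      show ?thesis by (rule affect[OF AX a b False x True h2])
    next
      case F: False
      have "x \<notin> blk a" using notin_blk[OF aX F] .
      then show ?thesis using w_ins by simp
    qed
    have wb: "w b (insert x A) = w b A"
    proof (cases "blk x = blk b")
      case True
      have h1': "p a {a, x} / p x {a, x} = p a {b, a, x} / p x {b, a, x}"
        using h1 by (simp add: insert_commute)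
      show ?thesis by (rule affect[OF AX b a _ x True h1']) (use False in auto)
    next
      case F: False
      have "x \<notin> blk b" using notin_blk[OF bX F] .
      then show ?thesis using w_ins by simp
    qed
    show ?thesis using rt_w[OF AX a b] rt_w[OF AxX] a b wa wb by simp
  qed
qed

end

theorem theorem5:
  fixes X :: "'a set" and p :: "'a \<Rightarrow> 'a set \<Rightarrow> real"
  assumes "finite X"
    and "positive_scf X p"
    and "\<exists>a\<in>X. \<exists>b\<in>X. \<exists>c\<in>X.
           \<not> equiv_p X p a b \<and> \<not> equiv_p X p b c \<and> \<not> equiv_p X p a c"
  shows "ISA1 X p \<and> ISA2 X p \<longleftrightarrow> strict_nondegenerate_NSC X p"
proof
  assume I: "ISA1 X p \<and> ISA2 X p"
  obtain a b c where abc: "a \<in> X" "b \<in> X" "c \<in> X"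
    "\<not> equiv_p X p a b" "\<not> equiv_p X p b c" "\<not> equiv_p X p a c"
    using assms(3) by blast
  interpret hard X p a b c
    by unfold_locales (use assms(1,2) I abc in auto)
  show "strict_nondegenerate_NSC X p" by (rule hard_dir)
next
  assume "strict_nondegenerate_NSC X p"
  then obtain P u v where "NSC_rep X p P u v" "NSC_strict P u v"
    unfolding strict_nondegenerate_NSC_def by blast
  then interpret easy X p P u v
    by unfold_locales (use assms(1,2) in auto)
  show "ISA1 X p \<and> ISA2 X p" using isa1 isa2 by blast
qed

end
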